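(* Let $X$ and $Y$ be topological vector spaces (over $\mathbb{R}$), let $\theta$ be the origin of $Y$, and let $D$ be a nonempty convex subset of $X$. Let $F: D\times D\rightrightarrows Y$ be a set-valued mapping satisfying: (i) for each $z\in D$, the set $\{x\in D: \theta\in F(x,z)\}$ is compactly closed; (ii) $F$ is a KKM-type mapping on $D$; (iii) for each $y\in D$ there exists $z\in D$ such that for all $x\in D$, $\theta\in F(z,x)$ implies $\theta\in F(x,y)$; (iv) there exist a nonempty compact subset $M$ of $D$ and a finite subset $L$ of $D$ such that for each $x\in D\setminus M$ there exists $y\in L$ with $\theta\notin F(x,y)$. Then there exists $\bar x\in M$ such that $\theta\in F(\bar x,y)$ for all $y\in D$.
   Context: A subset $A$ of a topological space $X$ is compactly closed if for every compact subset $M$ of $X$ the set $A\cap M$ is closed in $M$. A set-valued mapping $F: D\times D\rightrightarrows Y$ is called a KKM-type mapping on $D$ if for every finite subset $\{x_1,\dots,x_n\}\subset D$ and every $x\in \operatorname{co}\{x_1,\dots,x_n\}\cap D$ there exists $j\in\{1,\dots,n\}$ such that $\theta\in F(x_j,x)$. Here $\operatorname{co}$ denotes the convex hull. *)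

theory Defs
  imports "HOL-Analysis.Analysis"
begin

class real_topological_vector = real_vector + topological_space +
  assumes add_continuous_tvs:
    "\<And>S x y. open S \<Longrightarrow> x + y \<in> S \<Longrightarrow>
       \<exists>U V. open U \<and> open V \<and> x \<in> U \<and> y \<in> V \<and> (\<forall>u\<in>U. \<forall>v\<in>V. u + v \<in> S)"
  assumes scaleR_continuous_tvs:
    "\<And>S (c::real) x. open S \<Longrightarrow> c *\<^sub>R x \<in> S \<Longrightarrow>
       \<exists>A U. open A \<and> open U \<and> c \<in> A \<and> x \<in> U \<and> (\<forall>d\<in>A. \<forall>u\<in>U. d *\<^sub>R u \<in> S)"

definition compactly_closed :: "'a::topological_space set \<Rightarrow> bool" where
  "compactly_closed A \<longleftrightarrow> (\<forall>M. compact M \<longrightarrow> closedin (top_of_set M) (A \<inter> M))"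

definition KKM_type :: "'a::real_vector set \<Rightarrow> ('a \<Rightarrow> 'a \<Rightarrow> 'b::zero set) \<Rightarrow> bool" where
  "KKM_type D F \<longleftrightarrow>
     (\<forall>S. finite S \<and> S \<subseteq> D \<longrightarrow>
        (\<forall>x \<in> convex hull S \<inter> D. \<exists>xj \<in> S. 0 \<in> F xj x))"

end

theory Submission
  imports Defs "HOL-Homology.Brouwer_Degree"
begin



definition nball :: "nat \<Rightarrow> (nat \<Rightarrow> real) set" where
  "nball n = {x. (\<Sum>i\<le>n. (x i)^2) \<le> 1 \<and> (\<forall>i>n. x i = 0)}"

definition nsph :: "nat \<Rightarrow> (nat \<Rightarrow> real) set" where
  "nsph n = {x. (\<Sum>i\<le>n. (x i)^2) = 1 \<and> (\<forall>i>n. x i = 0)}"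

lemma nsphere_top: "nsphere n = top_of_set (nsph n)"
  by (simp add: nsphere nsph_def euclidean_product_topology)

lemma cs_le1:
  assumes "(\<Sum>i\<le>n. (x i)^2) \<le> 1" "(\<Sum>i\<le>n. (y i)^2) \<le> 1"
  shows "(\<Sum>i\<le>n. x i * y i) \<le> (1::real)"
proof -
  have "0 \<le> (\<Sum>i\<le>n. (x i - y i)^2)" by (simp add: sum_nonneg)
  also have "\<dots> = (\<Sum>i\<le>n. (x i)^2) + (\<Sum>i\<le>n. (y i)^2) - 2 * (\<Sum>i\<le>n. x i * y i)"
  proof -
    have "(x i - y i)^2 = (x i)^2 + (y i)^2 - 2 * (x i * y i)" for i
      by (simp add: power2_diff)
    then show ?thesis by (simp add: sum.distrib sum_subtractf sum_distrib_left)
  qed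
  finally show ?thesis using assms by linarith
qed

lemma brouwer_nball:
  fixes f :: "(nat \<Rightarrow> real) \<Rightarrow> (nat \<Rightarrow> real)"
  assumes cont: "continuous_on (nball n) f" and im: "f ` nball n \<subseteq> nball n"
  shows "\<exists>x\<in>nball n. f x = x"
proof (rule ccontr)
  assume "\<not> ?thesis"
  then have nofix: "\<And>x. x \<in> nball n \<Longrightarrow> f x \<noteq> x" by blast
  define u where "u (x::nat\<Rightarrow>real) = (\<lambda>i. x i - f x i)" for x
  define a where "a (x::nat\<Rightarrow>real) = (\<Sum>i\<le>n. (u x i)^2)" for x
  define b where "b (x::nat\<Rightarrow>real) = (\<Sum>i\<le>n. x i * u x i)" for x
  define c where "c (x::nat\<Rightarrow>real) = 1 - (\<Sum>i\<le>n. (x i)^2)" for x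
  define t where "t (x::nat\<Rightarrow>real) = (- b x + sqrt ((b x)^2 + a x * c x)) / a x" for x
  define r where "r (x::nat\<Rightarrow>real) = (\<lambda>i. x i + t x * u x i)" for x
  have apos: "a x > 0" if x: "x \<in> nball n" for x
  proof -
    obtain i where i: "x i \<noteq> f x i" using nofix[OF x] by (metis ext)
    have fx: "f x \<in> nball n" using im x by blast
    have "i \<le> n" using i x fx unfolding nball_def by (metis (mono_tags, lifting) mem_Collect_eq not_le)
    have "0 < (u x i)^2" using i by (simp add: u_def)
    also have "\<dots> \<le> a x" unfolding a_def
      by (rule member_le_sum) (use \<open>i \<le> n\<close> in auto)
    finally show ?thesis .
  qed
  have cnn: "c x \<ge> 0" if "x \<in> nball n" for x using that by (simp add: c_def nball_def)
  have rS: "r x \<in> nsph n" if x: "x \<in> nball n" for x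
  proof -
    have fx: "f x \<in> nball n" using im x by blast
    define s where "s = sqrt ((b x)^2 + a x * c x)"
    have s2: "s^2 = (b x)^2 + a x * c x"
      unfolding s_def using apos[OF x] cnn[OF x] by (simp add: add_nonneg_nonneg)
    have at: "a x * t x = s - b x" using apos[OF x] by (simp add: t_def s_def)
    have e1: "(\<Sum>i\<le>n. (r x i)^2) = (\<Sum>i\<le>n. (x i)^2) + 2 * t x * b x + (t x)^2 * a x"
    proof -
      have "(r x i)^2 = (x i)^2 + 2 * t x * (x i * u x i) + (t x)^2 * (u x i)^2" for i
        by (simp add: r_def power2_eq_square algebra_simps)
      then show ?thesis
        by (simp add: sum.distrib b_def a_def sum_distrib_left)
    qed
    have e2: "2 * t x * b x + (t x)^2 * a x = c x"
    proof -
      have "(2 * t x * b x + (t x)^2 * a x) * a x = (a x * t x) * (2 * b x) + (a x * t x)^2"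
        by (simp add: power2_eq_square algebra_simps)
      also have "\<dots> = c x * a x" unfolding at using s2 by (simp add: power2_eq_square algebra_simps)
      finally show ?thesis using apos[OF x] by simp
    qed
    have "(\<Sum>i\<le>n. (r x i)^2) = 1" using e1 e2 by (simp add: c_def)
    moreover have "\<forall>i>n. r x i = 0" using x fx by (simp add: r_def u_def nball_def)
    ultimately show ?thesis by (simp add: nsph_def)
  qed
  have rid: "r x = x" if x: "x \<in> nsph n" for x
  proof -
    have xb: "x \<in> nball n" using x by (simp add: nsph_def nball_def)
    have fx: "f x \<in> nball n" using im xb by blast
    have c0: "c x = 0" using x by (simp add: c_def nsph_def)
    have "b x = (\<Sum>i\<le>n. (x i)^2) - (\<Sum>i\<le>n. x i * f x i)"
      by (simp add: b_def u_def power2_eq_square algebra_simps sum_subtractf)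
    moreover have "(\<Sum>i\<le>n. x i * f x i) \<le> 1"
      using cs_le1 xb fx unfolding nball_def by blast
    ultimately have "b x \<ge> 0" using x by (simp add: nsph_def)
    then have "t x = 0" by (simp add: t_def c0)
    then show ?thesis by (simp add: r_def)
  qed
  have rcont: "continuous_on (nball n) r"
  proof -
    have fi: "continuous_on (nball n) (\<lambda>x. f x i)" for i
      by (rule continuous_on_product_then_coordinatewise[OF cont])
    have xi: "continuous_on (nball n) (\<lambda>x. x i :: real)" for i
      by (rule continuous_on_subset[OF continuous_on_product_coordinates]) simp
    have ui: "continuous_on (nball n) (\<lambda>x. u x i)" for i
      unfolding u_def by (rule continuous_on_diff[OF xi fi])
    have ac: "continuous_on (nball n) a" unfolding a_def
      by (intro continuous_on_sum continuous_on_power ui)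
    have bc: "continuous_on (nball n) b" unfolding b_def
      by (intro continuous_on_sum continuous_on_mult ui xi)
    have cc: "continuous_on (nball n) c" unfolding c_def
      by (intro continuous_on_diff continuous_on_const continuous_on_sum continuous_on_power xi)
    have tc: "continuous_on (nball n) t" unfolding t_def
      by (intro continuous_on_divide continuous_on_add continuous_on_minus continuous_on_real_sqrt
          continuous_on_mult continuous_on_power ac bc cc) (use apos in force)
    show ?thesis unfolding r_def
      by (intro continuous_on_coordinatewise_then_product continuous_on_add continuous_on_mult xi tc ui)
  qed
  have zb: "(\<lambda>i. 0) \<in> nball n" by (simp add: nball_def)
  define h where "h = (\<lambda>p::real \<times> (nat\<Rightarrow>real). r (\<lambda>i. (1 - fst p) * snd p i))"
  have g0: "(\<lambda>i. (1 - s) * x i) \<in> nball n" if s: "s \<in> {0..1}" and x: "x \<in> nsph n" for s x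
  proof -
    have x1: "(\<Sum>i\<le>n. (x i)^2) = 1" and x2: "\<forall>i>n. x i = 0" using x unfolding nsph_def by auto
    have "(\<Sum>i\<le>n. ((1 - s) * x i)^2) = (1-s)^2 * (\<Sum>i\<le>n. (x i)^2)"
      by (simp add: power_mult_distrib sum_distrib_left)
    also have "\<dots> = (1-s)^2" using x1 by simp
    also have "\<dots> \<le> 1" using s by (intro power_le_one) auto
    finally show ?thesis using x2 unfolding nball_def by auto
  qed
  have g: "(\<lambda>i. (1 - fst p) * snd p i) \<in> nball n" if "p \<in> {0..1} \<times> nsph n" for p
    using g0[of "fst p" "snd p"] that by (simp add: mem_Times_iff)
  have gc: "continuous_on ({0..1} \<times> nsph n) (\<lambda>p::real \<times> (nat\<Rightarrow>real). (\<lambda>i. (1 - fst p) * snd p i))"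
  proof (rule continuous_on_coordinatewise_then_product)
    fix i
    have "continuous_on UNIV (\<lambda>p::real \<times> (nat\<Rightarrow>real). snd p i)"
      using continuous_on_compose[OF continuous_on_snd[OF continuous_on_id] continuous_on_subset[OF continuous_on_product_coordinates[of i]]]
      by (simp add: o_def)
    then have "continuous_on ({0..1} \<times> nsph n) (\<lambda>p::real \<times> (nat\<Rightarrow>real). snd p i)"
      by (rule continuous_on_subset) simp
    moreover have "continuous_on ({0..1} \<times> nsph n) (\<lambda>p::real \<times> (nat\<Rightarrow>real). 1 - fst p)"
      by (intro continuous_on_diff continuous_on_const continuous_on_fst continuous_on_id)
    ultimately show "continuous_on ({0..1} \<times> nsph n) (\<lambda>p::real \<times> (nat\<Rightarrow>real). (1 - fst p) * snd p i)"
      by (rule continuous_on_mult[rotated])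
  qed
  have hc: "continuous_map (prod_topology (top_of_set {0..1}) (top_of_set (nsph n))) (top_of_set (nsph n)) h"
    unfolding prod_topology_subtopology_eu continuous_map_subtopology_eu h_def
  proof
    have "continuous_on ({0..1} \<times> nsph n) (r \<circ> (\<lambda>p::real \<times> (nat\<Rightarrow>real). (\<lambda>i. (1 - fst p) * snd p i)))"
      by (rule continuous_on_compose[OF gc continuous_on_subset[OF rcont]]) (use g in auto)
    then show "continuous_on ({0..1} \<times> nsph n) (\<lambda>p. r (\<lambda>i. (1 - fst p) * snd p i))"
      by (simp add: o_def)
    show "(\<lambda>p. r (\<lambda>i. (1 - fst p) * snd p i)) \<in> {0..1} \<times> nsph n \<rightarrow> nsph n"
      using g rS by auto
  qed
  have h0: "\<forall>x\<in>topspace (top_of_set (nsph n)). h (0, x) = id x" using rid by (simp add: h_def)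
  have h1: "\<forall>x\<in>topspace (top_of_set (nsph n)). h (1, x) = r (\<lambda>i. 0)" by (simp add: h_def)
  have "homotopic_with (\<lambda>x. True) (top_of_set (nsph n)) (top_of_set (nsph n)) id (\<lambda>x. r (\<lambda>i. 0))"
    apply (subst homotopic_with)
    using hc h0 h1 by auto
  then have "homotopic_with (\<lambda>x. True) (nsphere n) (nsphere n) id (\<lambda>x. r (\<lambda>i. 0))"
    by (simp add: nsphere_top)
  then have "contractible_space (nsphere n)" unfolding contractible_space_def by blast
  then show False using non_contractible_space_nsphere by blast
qed




definition sdx :: "nat \<Rightarrow> (nat \<Rightarrow> real) set" where
  "sdx n = {x. (\<forall>i. 0 \<le> x i) \<and> (\<forall>i>n. x i = 0) \<and> (\<Sum>i\<le>n. x i) = 1}"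

lemma sdx_le1: "x \<in> sdx n \<Longrightarrow> x i \<le> 1"
proof -
  assume x: "x \<in> sdx n"
  show "x i \<le> 1"
  proof (cases "i \<le> n")
    case True
    have "x i \<le> (\<Sum>i\<le>n. x i)"
      by (rule member_le_sum) (use x True in \<open>auto simp: sdx_def\<close>)
    then show ?thesis using x by (simp add: sdx_def)
  next
    case False then show ?thesis using x by (simp add: sdx_def)
  qed
qed

lemma sdx_sub_nball: "sdx n \<subseteq> nball n"
proof
  fix x assume x: "x \<in> sdx n"
  have "(\<Sum>i\<le>n. (x i)^2) \<le> (\<Sum>i\<le>n. x i)"
  proof (rule sum_mono)
    fix i
    have "0 \<le> x i" "x i \<le> 1" using x sdx_le1[OF x, of i] by (auto simp: sdx_def)
    then show "(x i)^2 \<le> x i" by (simp add: power2_eq_square mult_left_le)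
  qed
  then show "x \<in> nball n" using x by (simp add: sdx_def nball_def)
qed

lemma brouwer_sdx:
  fixes f :: "(nat \<Rightarrow> real) \<Rightarrow> (nat \<Rightarrow> real)"
  assumes cont: "continuous_on (sdx n) f" and im: "f ` sdx n \<subseteq> sdx n"
  shows "\<exists>x\<in>sdx n. f x = x"
proof -
  define c where "c (x::nat\<Rightarrow>real) = (\<lambda>i. max 0 (x i))" for x
  define m where "m (x::nat\<Rightarrow>real) = (\<Sum>i\<le>n. c x i)" for x
  define \<rho> where "\<rho> (x::nat\<Rightarrow>real) = (\<lambda>i. c x i / max 1 (m x) + (if i = 0 then 1 - m x / max 1 (m x) else 0))" for x
  have mnn: "0 \<le> m x" for x unfolding m_def c_def by (intro sum_nonneg) auto
  have rho_in: "\<rho> x \<in> sdx n" if x: "x \<in> nball n" for x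
  proof -
    have le: "m x / max 1 (m x) \<le> 1" using mnn[of x] by (simp add: divide_le_eq_1 max_def)
    have nn: "\<forall>i. 0 \<le> \<rho> x i"
      using le by (auto simp: \<rho>_def c_def)
    have z: "\<forall>i>n. \<rho> x i = 0" using x by (auto simp: \<rho>_def c_def nball_def)
    have "(\<Sum>i\<le>n. \<rho> x i) = (\<Sum>i\<le>n. c x i / max 1 (m x)) + (\<Sum>i\<le>n. (if i = 0 then 1 - m x / max 1 (m x) else 0))"
      by (simp add: \<rho>_def sum.distrib)
    also have "\<dots> = m x / max 1 (m x) + (1 - m x / max 1 (m x))"
      by (simp add: m_def sum_divide_distrib)
    finally show ?thesis using nn z by (simp add: sdx_def)
  qed
  have rho_id: "\<rho> x = x" if x: "x \<in> sdx n" for x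
  proof -
    have "c x = x" using x by (auto simp: c_def sdx_def max_def)
    then have m1: "m x = 1" using x by (simp add: m_def sdx_def)
    show ?thesis
    proof
      fix i show "\<rho> x i = x i" unfolding \<rho>_def m1 using \<open>c x = x\<close> by simp
    qed
  qed
  have rho_cont: "continuous_on (nball n) \<rho>"
  proof -
    have xi: "continuous_on (nball n) (\<lambda>x. x i :: real)" for i
      by (rule continuous_on_subset[OF continuous_on_product_coordinates]) simp
    have ci: "continuous_on (nball n) (\<lambda>x. c x i)" for i
      unfolding c_def by (intro continuous_on_max continuous_on_const xi)
    have mc: "continuous_on (nball n) m" unfolding m_def
      by (intro continuous_on_sum ci)
    have mx: "continuous_on (nball n) (\<lambda>x. max 1 (m x))"
      by (intro continuous_on_max continuous_on_const mc)
    show ?thesis unfolding \<rho>_def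
    proof (rule continuous_on_coordinatewise_then_product)
      fix i
      have d1: "continuous_on (nball n) (\<lambda>x. c x i / max 1 (m x))"
        by (rule continuous_on_divide[OF ci mx]) (auto simp: max_def)
      have d2: "continuous_on (nball n) (\<lambda>x. m x / max 1 (m x))"
        by (rule continuous_on_divide[OF mc mx]) (auto simp: max_def)
      show "continuous_on (nball n) (\<lambda>x. c x i / max 1 (m x) + (if i = 0 then 1 - m x / max 1 (m x) else 0))"
        by (intro continuous_on_add d1) (cases "i = 0"; simp add: continuous_on_diff[OF continuous_on_const d2])
    qed
  qed
  define g where "g = f \<circ> \<rho>"
  have gc: "continuous_on (nball n) g"
    unfolding g_def
    by (rule continuous_on_compose[OF rho_cont continuous_on_subset[OF cont]]) (use rho_in in auto)
  have gi: "g ` nball n \<subseteq> nball n"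
    using rho_in im sdx_sub_nball by (auto simp: g_def)
  obtain x where x: "x \<in> nball n" "g x = x" using brouwer_nball[OF gc gi] by blast
  have "x \<in> sdx n" using x rho_in im by (metis comp_apply g_def image_subset_iff)
  then have "f x = x" using x rho_id by (simp add: g_def)
  then show ?thesis using \<open>x \<in> sdx n\<close> by blast
qed




lemma kkm_sdx:
  fixes C :: "nat \<Rightarrow> (nat \<Rightarrow> real) set"
  assumes cl: "\<And>i. i \<le> n \<Longrightarrow> closed (C i)"
    and cover: "\<And>x. x \<in> sdx n \<Longrightarrow> \<exists>i\<le>n. 0 < x i \<and> x \<in> C i"
  shows "\<exists>x\<in>sdx n. \<forall>i\<le>n. x \<in> C i"
proof -
  have ne: "C i \<noteq> {}" if i: "i \<le> n" for i
  proof -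
    define e where "e = (\<lambda>j. if j = i then 1 else (0::real))"
    have "e \<in> sdx n" using i by (auto simp: e_def sdx_def)
    then obtain j where "j \<le> n" "0 < e j" "e \<in> C j" using cover by blast
    then show ?thesis by (auto simp: e_def split: if_splits)
  qed
  define d where "d x i = infdist x (C i)" for x i
  define s where "s x = (\<Sum>j\<le>n. d x j)" for x
  define f where "f x = (\<lambda>i. if i \<le> n then (x i + d x i) / (1 + s x) else 0)" for x
  have dnn: "0 \<le> d x i" for x i by (simp add: d_def infdist_nonneg)
  have snn: "0 \<le> s x" for x unfolding s_def by (intro sum_nonneg dnn)
  have fin: "f x \<in> sdx n" if x: "x \<in> sdx n" for x
  proof -
    have "(\<Sum>i\<le>n. f x i) = (\<Sum>i\<le>n. (x i + d x i) / (1 + s x))" by (simp add: f_def)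
    also have "\<dots> = ((\<Sum>i\<le>n. x i) + s x) / (1 + s x)"
      by (simp add: sum_divide_distrib[symmetric] sum.distrib s_def)
    also have "\<dots> = 1" using x snn[of x] by (simp add: sdx_def)
    finally have "(\<Sum>i\<le>n. f x i) = 1" .
    moreover have "\<forall>i. 0 \<le> f x i" using x snn[of x] dnn[of x] by (simp add: f_def sdx_def add_nonneg_nonneg)
    moreover have "\<forall>i>n. f x i = 0" by (simp add: f_def)
    ultimately show ?thesis by (simp add: sdx_def)
  qed
  have fc: "continuous_on (sdx n) f"
  proof -
    have xi: "continuous_on (sdx n) (\<lambda>x. x i :: real)" for i
      by (rule continuous_on_subset[OF continuous_on_product_coordinates]) simp
    have di: "continuous_on (sdx n) (\<lambda>x. d x i)" for i
      unfolding d_def by (intro continuous_on_infdist continuous_on_id)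
    have sc: "continuous_on (sdx n) s" unfolding s_def by (intro continuous_on_sum di)
    show ?thesis unfolding f_def
    proof (rule continuous_on_coordinatewise_then_product)
      fix i
      have "continuous_on (sdx n) (\<lambda>x. (x i + d x i) / (1 + s x))"
        by (rule continuous_on_divide[OF continuous_on_add[OF xi di] continuous_on_add[OF continuous_on_const sc]])
          (use snn in \<open>auto simp: add_nonneg_eq_0_iff\<close>)
      then show "continuous_on (sdx n) (\<lambda>x. if i \<le> n then (x i + d x i) / (1 + s x) else 0)"
        by (cases "i \<le> n") auto
    qed
  qed
  obtain x where x: "x \<in> sdx n" "f x = x" using brouwer_sdx[OF fc] fin by blast
  have eq: "x i * s x = d x i" if "i \<le> n" for i
  proof -
    have "(x i + d x i) / (1 + s x) = x i" using x(2) that by (metis f_def)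
    then have "x i + d x i = x i * (1 + s x)" using snn[of x]
      by (simp add: divide_eq_eq add_nonneg_eq_0_iff)
    then show ?thesis by (simp add: algebra_simps)
  qed
  obtain i where i: "i \<le> n" "0 < x i" "x \<in> C i" using cover[OF x(1)] by blast
  have "d x i = 0" unfolding d_def using i(3) by simp
  then have "s x = 0" using eq[OF i(1)] i(2) by simp
  then have d0: "d x j = 0" if "j \<le> n" for j
    using that dnn unfolding s_def by (simp add: sum_nonneg_eq_0_iff)
  have "\<forall>j\<le>n. x \<in> C j"
  proof (intro allI impI)
    fix j assume j: "j \<le> n"
    have "x \<in> closure (C j)" using in_closure_iff_infdist_zero[OF ne[OF j]] d0[OF j] by (simp add: d_def)
    then show "x \<in> C j" using cl[OF j] by (simp add: closure_closed)
  qed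
  then show ?thesis using x(1) by blast
qed




lemma compact_sdx: "compact (sdx n)"
proof -
  define Bx where "Bx = PiE UNIV (\<lambda>i::nat. if i \<le> n then {0..1::real} else {0})"
  have "compactin (product_topology (\<lambda>_. euclideanreal) UNIV) Bx"
    unfolding Bx_def compactin_PiE by auto
  then have cB: "compact Bx" by (simp add: euclidean_product_topology)
  have c1: "closed {x::nat\<Rightarrow>real. \<forall>i. 0 \<le> x i}"
    by (intro closed_Collect_all closed_Collect_le continuous_on_const continuous_on_product_coordinates)
  have c2: "closed {x::nat\<Rightarrow>real. \<forall>i. (if n < i then x i else 0) = 0}"
  proof (intro closed_Collect_all)
    fix i show "closed {x::nat\<Rightarrow>real. (if n < i then x i else 0) = 0}"
      by (cases "n < i") (auto intro: closed_Collect_eq continuous_on_const continuous_on_product_coordinates)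
  qed
  have c3: "closed {x::nat\<Rightarrow>real. (\<Sum>i\<le>n. x i) = 1}"
    by (intro closed_Collect_eq continuous_on_const continuous_on_sum continuous_on_product_coordinates)
  have eq: "sdx n = Bx \<inter> ({x. \<forall>i. 0 \<le> x i} \<inter> {x. \<forall>i. (if n < i then x i else 0) = 0} \<inter> {x. (\<Sum>i\<le>n. x i) = 1})"
  proof (intro equalityI subsetI)
    fix x assume x: "x \<in> sdx n"
    then have "x \<in> Bx" using sdx_le1[OF x] by (auto simp: Bx_def sdx_def PiE_def)
    then show "x \<in> Bx \<inter> ({x. \<forall>i. 0 \<le> x i} \<inter> {x. \<forall>i. (if n < i then x i else 0) = 0} \<inter> {x. (\<Sum>i\<le>n. x i) = 1})"
      using x by (auto simp: sdx_def)
  next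
    fix x assume "x \<in> Bx \<inter> ({x. \<forall>i. 0 \<le> x i} \<inter> {x. \<forall>i. (if n < i then x i else 0) = 0} \<inter> {x. (\<Sum>i\<le>n. x i) = 1})"
    then show "x \<in> sdx n" unfolding sdx_def by (auto split: if_splits)
  qed
  show ?thesis unfolding eq using cB c1 c2 c3 by (intro compact_Int_closed closed_Int)
qed

lemma tvs_cont_add:
  fixes f g :: "'c::topological_space \<Rightarrow> 'a::real_topological_vector"
  assumes f: "continuous_on S f" and g: "continuous_on S g"
  shows "continuous_on S (\<lambda>x. f x + g x)"
  unfolding continuous_on_topological
proof (intro ballI allI impI)
  fix x B assume x: "x \<in> S" and B: "open B" "f x + g x \<in> B"
  obtain U V where UV: "open U" "open V" "f x \<in> U" "g x \<in> V" "\<forall>u\<in>U. \<forall>v\<in>V. u + v \<in> B"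
    using add_continuous_tvs[OF B] by blast
  obtain A1 where A1: "open A1" "x \<in> A1" "\<forall>y\<in>S. y \<in> A1 \<longrightarrow> f y \<in> U"
    using f x UV unfolding continuous_on_topological by metis
  obtain A2 where A2: "open A2" "x \<in> A2" "\<forall>y\<in>S. y \<in> A2 \<longrightarrow> g y \<in> V"
    using g x UV unfolding continuous_on_topological by metis
  show "\<exists>A. open A \<and> x \<in> A \<and> (\<forall>y\<in>S. y \<in> A \<longrightarrow> f y + g y \<in> B)"
    by (rule exI[of _ "A1 \<inter> A2"]) (use A1 A2 UV in auto)
qed

lemma tvs_cont_scale:
  fixes g :: "'c::topological_space \<Rightarrow> real" and v :: "'a::real_topological_vector"
  assumes g: "continuous_on S g"
  shows "continuous_on S (\<lambda>x. g x *\<^sub>R v)"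
  unfolding continuous_on_topological
proof (intro ballI allI impI)
  fix x B assume x: "x \<in> S" and B: "open B" "g x *\<^sub>R v \<in> B"
  obtain A U where AU: "open A" "open U" "g x \<in> A" "v \<in> U" "\<forall>d\<in>A. \<forall>u\<in>U. d *\<^sub>R u \<in> B"
    using scaleR_continuous_tvs[OF B] by blast
  obtain A1 where A1: "open A1" "x \<in> A1" "\<forall>y\<in>S. y \<in> A1 \<longrightarrow> g y \<in> A"
    using g x AU unfolding continuous_on_topological by metis
  show "\<exists>A. open A \<and> x \<in> A \<and> (\<forall>y\<in>S. y \<in> A \<longrightarrow> g y *\<^sub>R v \<in> B)"
    by (rule exI[of _ A1]) (use A1 AU in auto)
qed

lemma tvs_cont_sum:
  fixes h :: "nat \<Rightarrow> 'c::topological_space \<Rightarrow> 'a::real_topological_vector"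
  assumes "finite I" "\<And>i. i \<in> I \<Longrightarrow> continuous_on S (h i)"
  shows "continuous_on S (\<lambda>x. \<Sum>i\<in>I. h i x)"
  using assms
proof (induction I rule: finite_induct)
  case empty
  then show ?case by (simp add: continuous_on_const)
next
  case (insert a I)
  then show ?case by (simp add: tvs_cont_add)
qed




lemma finite_step:
  fixes D :: "'a::real_topological_vector set"
    and F :: "'a \<Rightarrow> 'a \<Rightarrow> 'b::real_topological_vector set"
  assumes cD: "convex D"
    and i: "\<forall>z\<in>D. compactly_closed {x \<in> D. 0 \<in> F x z}"
    and ii: "KKM_type D F"
    and iii: "\<forall>y\<in>D. \<exists>z\<in>D. \<forall>x\<in>D. 0 \<in> F z x \<longrightarrow> 0 \<in> F x y"
    and Y: "finite Y" "Y \<noteq> {}" "Y \<subseteq> D"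
  shows "\<exists>x\<in>D. \<forall>y\<in>Y. 0 \<in> F x y"
proof -
  obtain N :: nat and yy where YN: "Y = yy ` {i. i < N}"
    using finite_imp_nat_seg_image_inj_on[OF Y(1)] by blast
  then have "N > 0" using Y(2) by (cases N) auto
  define n where "n = N - 1"
  have Nn: "{i. i < N} = {..n}" using \<open>N > 0\<close> by (auto simp: n_def)
  have Yn: "Y = yy ` {..n}" using YN Nn by simp
  have yD: "yy i \<in> D" if "i \<le> n" for i using Yn Y(3) that by auto
  have "\<forall>i. \<exists>z. i \<le> n \<longrightarrow> z \<in> D \<and> (\<forall>x\<in>D. 0 \<in> F z x \<longrightarrow> 0 \<in> F x (yy i))"
    using iii yD by metis
  then obtain zz where zz: "\<And>i. i \<le> n \<Longrightarrow> zz i \<in> D"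
    "\<And>i x. i \<le> n \<Longrightarrow> x \<in> D \<Longrightarrow> 0 \<in> F (zz i) x \<Longrightarrow> 0 \<in> F x (yy i)"
    by metis
  define \<phi> where "\<phi> (l::nat\<Rightarrow>real) = (\<Sum>i\<le>n. l i *\<^sub>R zz i)" for l
  have \<phi>c: "continuous_on (sdx n) \<phi>"
  proof -
    have xi: "continuous_on (sdx n) (\<lambda>x. x i :: real)" for i
      by (rule continuous_on_subset[OF continuous_on_product_coordinates]) simp
    show ?thesis unfolding \<phi>_def
      by (intro tvs_cont_sum tvs_cont_scale xi) auto
  qed
  have hull: "\<phi> l \<in> convex hull (zz ` {i. i \<le> n \<and> 0 < l i})" if l: "l \<in> sdx n" for l
  proof -
    define J where "J = {i. i \<le> n \<and> 0 < l i}"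
    have J: "J \<subseteq> {..n}" "finite J" by (auto simp: J_def)
    have z: "l i = 0" if "i \<in> {..n} - J" for i using that l by (auto simp: J_def sdx_def less_le)
    have "\<phi> l = (\<Sum>i\<in>J. l i *\<^sub>R zz i)" unfolding \<phi>_def
      by (rule sum.mono_neutral_right) (use J z in auto)
    moreover have "(\<Sum>i\<in>J. l i) = 1"
    proof -
      have "(\<Sum>i\<in>J. l i) = (\<Sum>i\<le>n. l i)"
        by (rule sum.mono_neutral_left) (use J z in auto)
      then show ?thesis using l by (simp add: sdx_def)
    qed
    moreover have "(\<Sum>i\<in>J. l i *\<^sub>R zz i) \<in> convex hull (zz ` J)"
      by (rule convex_sum[OF J(2) convex_convex_hull]) (use \<open>(\<Sum>i\<in>J. l i) = 1\<close> l in \<open>auto simp: J_def sdx_def intro: hull_inc\<close>)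
    ultimately show ?thesis unfolding J_def[symmetric] by simp
  qed
  have \<phi>D: "\<phi> l \<in> D" if l: "l \<in> sdx n" for l
  proof -
    have "convex hull (zz ` {i. i \<le> n \<and> 0 < l i}) \<subseteq> D"
      by (rule hull_minimal) (use zz(1) cD in auto)
    then show ?thesis using hull[OF l] by blast
  qed
  define C where "C i = {l \<in> sdx n. \<phi> l \<in> D \<and> 0 \<in> F (\<phi> l) (yy i)}" for i
  have cover: "\<exists>i\<le>n. 0 < l i \<and> l \<in> C i" if l: "l \<in> sdx n" for l
  proof -
    define S where "S = zz ` {i. i \<le> n \<and> 0 < l i}"
    have S: "finite S" "S \<subseteq> D" using zz(1) by (auto simp: S_def)
    have "\<phi> l \<in> convex hull S \<inter> D" using hull[OF l] \<phi>D[OF l] by (simp add: S_def)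
    then obtain xj where "xj \<in> S" "0 \<in> F xj (\<phi> l)"
      using ii S unfolding KKM_type_def by blast
    then obtain i where i: "i \<le> n" "0 < l i" "0 \<in> F (zz i) (\<phi> l)" by (auto simp: S_def)
    then have "0 \<in> F (\<phi> l) (yy i)" using zz(2) \<phi>D[OF l] by blast
    then show ?thesis using i l \<phi>D[OF l] by (auto simp: C_def)
  qed
  have closedC: "closed (C i)" if "i \<le> n" for i
  proof -
    define K where "K = \<phi> ` sdx n"
    have cK: "compact K" unfolding K_def by (rule compact_continuous_image[OF \<phi>c compact_sdx])
    have "compactly_closed {x \<in> D. 0 \<in> F x (yy i)}" using i yD[OF that] by blast
    then have cl: "closedin (top_of_set K) ({x \<in> D. 0 \<in> F x (yy i)} \<inter> K)"
      using cK unfolding compactly_closed_def by blast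
    have "closedin (top_of_set (sdx n)) (sdx n \<inter> \<phi> -` ({x \<in> D. 0 \<in> F x (yy i)} \<inter> K))"
      by (rule continuous_closedin_preimage_gen[OF \<phi>c _ cl]) (auto simp: K_def)
    moreover have "sdx n \<inter> \<phi> -` ({x \<in> D. 0 \<in> F x (yy i)} \<inter> K) = C i"
      by (auto simp: C_def K_def)
    ultimately have "closedin (top_of_set (sdx n)) (C i)" by simp
    then show ?thesis using closedin_closed_trans compact_imp_closed[OF compact_sdx] by blast
  qed
  obtain l where l: "l \<in> sdx n" "\<forall>i\<le>n. l \<in> C i"
    using kkm_sdx[of n C] closedC cover by blast
  show ?thesis
  proof (intro bexI ballI)
    show "\<phi> l \<in> D" using \<phi>D[OF l(1)] .
    fix y assume "y \<in> Y"
    then obtain i where "i \<le> n" "y = yy i" using Yn by auto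
    then show "0 \<in> F (\<phi> l) y" using l(2) by (auto simp: C_def)
  qed
qed

theorem corollary2p5:
  fixes D :: "'a::real_topological_vector set"
    and F :: "'a \<Rightarrow> 'a \<Rightarrow> 'b::real_topological_vector set"
    and M L :: "'a set"
  assumes "D \<noteq> {}" and "convex D"
    and i: "\<forall>z\<in>D. compactly_closed {x \<in> D. 0 \<in> F x z}"
    and ii: "KKM_type D F"
    and iii: "\<forall>y\<in>D. \<exists>z\<in>D. \<forall>x\<in>D. 0 \<in> F z x \<longrightarrow> 0 \<in> F x y"
    and iv: "M \<noteq> {}" "compact M" "M \<subseteq> D" "finite L" "L \<subseteq> D"
            "\<forall>x \<in> D - M. \<exists>y\<in>L. 0 \<notin> F x y"
  shows "\<exists>xbar \<in> M. \<forall>y\<in>D. 0 \<in> F xbar y"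
proof -
  obtain d0 where d0: "d0 \<in> D" using assms(1) by blast
  define A where "A y = {x \<in> M. 0 \<in> F x y}" for y
  have finY: "M \<inter> \<Inter>(A ` Y) \<noteq> {}" if Y: "finite Y" "Y \<subseteq> D" for Y
  proof -
    have "\<exists>x\<in>D. \<forall>y\<in>insert d0 (Y \<union> L). 0 \<in> F x y"
      by (rule finite_step[OF assms(2) i ii iii]) (use Y iv d0 in auto)
    then obtain x where x: "x \<in> D" "\<forall>y\<in>insert d0 (Y \<union> L). 0 \<in> F x y" by blast
    have "x \<in> M" using iv(6) x by blast
    then have "x \<in> M \<inter> \<Inter>(A ` Y)" using x by (auto simp: A_def)
    then show ?thesis by blast
  qed
  have cM: "compactin (top_of_set M) M"
    using iv(2) by (simp add: compactin_subtopology)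
  have clA: "closedin (top_of_set M) (A y)" if "y \<in> D" for y
  proof -
    have "closedin (top_of_set M) ({x \<in> D. 0 \<in> F x y} \<inter> M)"
      using i that iv(2) unfolding compactly_closed_def by blast
    moreover have "{x \<in> D. 0 \<in> F x y} \<inter> M = A y" using iv(3) by (auto simp: A_def)
    ultimately show ?thesis by simp
  qed
  have "M \<inter> \<Inter>(A ` D) \<noteq> {}"
  proof -
    have "\<forall>\<F>. finite \<F> \<and> \<F> \<subseteq> A ` D \<longrightarrow> M \<inter> \<Inter>\<F> \<noteq> {}"
    proof (intro allI impI)
      fix \<F> assume "finite \<F> \<and> \<F> \<subseteq> A ` D"
      then obtain Y where "Y \<subseteq> D" "finite Y" "\<F> = A ` Y"
        by (meson finite_subset_image)
      then show "M \<inter> \<Inter>\<F> \<noteq> {}" using finY by blast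
    qed
    then show ?thesis using cM clA unfolding compactin_fip by blast
  qed
  then obtain xb where "xb \<in> M" "\<forall>y\<in>D. xb \<in> A y" by blast
  then show ?thesis by (auto simp: A_def)
qed


end
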